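(* Let $(B,\lfloor\cdot,\cdot\rfloor,\|\cdot\|)$ be an SSDB space, $q(b):=\tfrac12\lfloor b,b\rfloor$, and let $f,g\colon B\to\,]{-}\infty,\infty]$ be proper convex lower semicontinuous BC--functions. Suppose $\rho\colon B\to B$ is a continuous linear bijection such that $\lfloor\rho(b),\rho(c)\rfloor=\lfloor b,-c\rfloor$ for all $b,c\in B$. Then $\mathrm{dom}\,f-\rho^{-1}\mathrm{dom}\,g=B\iff{\cal P}_q(f)-\rho^{-1}{\cal P}_q(g)=B$, and $\mathrm{dom}\,f+\rho^{-1}\mathrm{dom}\,g=B\iff{\cal P}_q(f)+\rho^{-1}{\cal P}_q(g)=B$.
   Context: An SSDB space is a triple $(B,\lfloor\cdot,\cdot\rfloor,\|\cdot\|)$ where $B$ is a nonzero real vector space, $\lfloor\cdot,\cdot\rfloor$ a symmetric bilinear form, $(B,\|\cdot\|)$ a Banach space, and there is a linear isometry $\iota$ of $B$ onto $B^*$ with $\langle b,\iota(c)\rangle=\lfloor b,c\rfloor$. $\mathrm{dom}\,f:=\{b\colon f(b)\in\mathbb{R}\}$, $f^@(c):=\sup_b[\lfloor b,c\rfloor-f(b)]$. A BC--function is a proper convex $f$ with $f^@(b)\ge f(b)\ge q(b)$ for all $b$. ${\cal P}_q(f):=\{b\colon f(b)=q(b)\}$. *)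

theory Defs
  imports "HOL-Analysis.Analysis"
begin

definition SSDB :: "('a::banach \<Rightarrow> 'a \<Rightarrow> real) \<Rightarrow> bool" where
  "SSDB s \<longleftrightarrow>
     (\<exists>b::'a. b \<noteq> 0) \<and>
     (\<forall>b c. s b c = s c b) \<and>
     (\<forall>c. linear (\<lambda>b. s b c)) \<and>
     (\<exists>\<iota> :: 'a \<Rightarrow> ('a \<Rightarrow>\<^sub>L real).
        linear \<iota> \<and> (\<forall>c. norm (\<iota> c) = norm c) \<and> surj \<iota> \<and>
        (\<forall>b c. blinfun_apply (\<iota> c) b = s b c))"

definition qf :: "('a \<Rightarrow> 'a \<Rightarrow> real) \<Rightarrow> 'a \<Rightarrow> real" where
  "qf s b = s b b / 2"

definition edom :: "('a \<Rightarrow> ereal) \<Rightarrow> 'a set" where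
  "edom f = {b. \<bar>f b\<bar> \<noteq> \<infinity>}"

definition proper_fun :: "('a \<Rightarrow> ereal) \<Rightarrow> bool" where
  "proper_fun f \<longleftrightarrow> (\<forall>b. f b \<noteq> -\<infinity>) \<and> (\<exists>b. f b \<noteq> \<infinity>)"

definition convex_fun :: "('a::real_vector \<Rightarrow> ereal) \<Rightarrow> bool" where
  "convex_fun f \<longleftrightarrow> (\<forall>x y t. 0 < t \<and> t < 1 \<longrightarrow>
      f (t *\<^sub>R x + (1 - t) *\<^sub>R y) \<le> ereal t * f x + ereal (1 - t) * f y)"

definition lsc_fun :: "('a::topological_space \<Rightarrow> ereal) \<Rightarrow> bool" where
  "lsc_fun f \<longleftrightarrow> (\<forall>x. f x \<le> Liminf (at x) f)"

definition fenchel_at :: "('a \<Rightarrow> 'a \<Rightarrow> real) \<Rightarrow> ('a \<Rightarrow> ereal) \<Rightarrow> 'a \<Rightarrow> ereal" where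
  "fenchel_at s f c = (SUP b. ereal (s b c) - f b)"

definition BC_fun :: "('a::real_vector \<Rightarrow> 'a \<Rightarrow> real) \<Rightarrow> ('a \<Rightarrow> ereal) \<Rightarrow> bool" where
  "BC_fun s f \<longleftrightarrow> proper_fun f \<and> convex_fun f \<and>
     (\<forall>b. fenchel_at s f b \<ge> f b \<and> f b \<ge> ereal (qf s b))"

definition Pq :: "('a \<Rightarrow> 'a \<Rightarrow> real) \<Rightarrow> ('a \<Rightarrow> ereal) \<Rightarrow> 'a set" where
  "Pq s f = {b. f b = ereal (qf s b)}"

definition set_diff_mk :: "'a::ab_group_add set \<Rightarrow> 'a set \<Rightarrow> 'a set" where
  "set_diff_mk A C = {a - c | a c. a \<in> A \<and> c \<in> C}"

definition set_sum_mk :: "'a::ab_group_add set \<Rightarrow> 'a set \<Rightarrow> 'a set" where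
  "set_sum_mk A C = {a + c | a c. a \<in> A \<and> c \<in> C}"

end

theory Submission
  imports Defs
begin

definition hb_good :: "('a::real_vector \<Rightarrow> real) \<Rightarrow> ('a \<times> real) set \<Rightarrow> bool" where
  "hb_good p G \<longleftrightarrow> (0,0) \<in> G \<and> (\<forall>x\<in>G. \<forall>y\<in>G. x + y \<in> G) \<and> (\<forall>c. \<forall>x\<in>G. c *\<^sub>R x \<in> G)
     \<and> (\<forall>x s t. (x,s) \<in> G \<longrightarrow> (x,t) \<in> G \<longrightarrow> s = t) \<and> (\<forall>x t. (x,t) \<in> G \<longrightarrow> t \<le> p x)"

lemma hb_goodD:
  assumes "hb_good p G"
  shows hb_good0: "(0,0) \<in> G" and hb_good_add: "\<And>x y. x\<in>G \<Longrightarrow> y\<in>G \<Longrightarrow> x + y \<in> G"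
    and hb_good_sc: "\<And>c x. x\<in>G \<Longrightarrow> c *\<^sub>R x \<in> G"
    and hb_good_f: "\<And>x s t. (x,s) \<in> G \<Longrightarrow> (x,t) \<in> G \<Longrightarrow> s = t"
    and hb_good_p: "\<And>x t. (x,t) \<in> G \<Longrightarrow> t \<le> p x"
  using assms unfolding hb_good_def by blast+

lemma hb_extend:
  fixes p :: "'a::real_vector \<Rightarrow> real"
  assumes sub: "\<And>x y. p (x + y) \<le> p x + p y" and hom: "\<And>c x. c > 0 \<Longrightarrow> p (c *\<^sub>R x) = c * p x"
    and G: "hb_good p G" and x0: "\<forall>t. (x0, t) \<notin> G"
  shows "\<exists>G'. hb_good p G' \<and> G \<subseteq> G' \<and> G' \<noteq> G"
proof -
  have G0: "(0,0) \<in> G" and Gadd: "\<And>x y. x\<in>G \<Longrightarrow> y\<in>G \<Longrightarrow> x + y \<in> G"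
    and Gsc: "\<And>c x. x\<in>G \<Longrightarrow> c *\<^sub>R x \<in> G"
    and Gf: "\<And>x s t. (x,s) \<in> G \<Longrightarrow> (x,t) \<in> G \<Longrightarrow> s = t"
    and Gp: "\<And>x t. (x,t) \<in> G \<Longrightarrow> t \<le> p x" using G unfolding hb_good_def by blast+
  define L where "L = {t - p (y - x0) | y t. (y,t) \<in> G}"
  define c where "c = Sup L"
  have key: "t - p (y - x0) \<le> p (y' + x0) - t'" if "(y,t) \<in> G" "(y',t') \<in> G" for y t y' t'
  proof -
    have "(y + y', t + t') \<in> G" using Gadd[OF that] by simp
    hence "t + t' \<le> p (y + y')" by (rule Gp)
    also have "\<dots> \<le> p (y - x0) + p (y' + x0)" using sub[of "y - x0" "y' + x0"] by simp
    finally show ?thesis by simp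
  qed
  have Lne: "L \<noteq> {}" using G0 unfolding L_def by blast
  have Lbdd: "bdd_above L" unfolding L_def bdd_above_def using key[OF _ G0] by auto
  have c1: "t - p (y - x0) \<le> c" if "(y,t) \<in> G" for y t
    unfolding c_def by (rule cSup_upper[OF _ Lbdd]) (use that L_def in blast)
  have c2: "c \<le> p (y' + x0) - t'" if "(y',t') \<in> G" for y' t'
    unfolding c_def by (rule cSup_least[OF Lne]) (use key that L_def in blast)
  define G' where "G' = {(y + a *\<^sub>R x0, t + a * c) | y t a. (y,t) \<in> G}"
  have sub1: "G \<subseteq> G'"
  proof
    fix z assume "z \<in> G"
    then show "z \<in> G'" unfolding G'_def by (cases z) (rule CollectI, rule exI[of _ "fst z"], rule exI[of _ "snd z"], rule exI[of _ 0], simp)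
  qed
  have new: "(x0, c) \<in> G'" unfolding G'_def by (rule CollectI, rule exI[of _ 0], rule exI[of _ 0], rule exI[of _ 1], simp add: G0)
  have "G' \<noteq> G" using new x0 by blast
  moreover have "hb_good p G'"
    unfolding hb_good_def
  proof (intro conjI allI ballI impI)
    show "(0,0) \<in> G'" using sub1 G0 by blast
  next
    fix u v assume "u \<in> G'" "v \<in> G'"
    then obtain y t a y' t' a' where u: "u = (y + a *\<^sub>R x0, t + a * c)" "(y,t)\<in>G"
      and v: "v = (y' + a' *\<^sub>R x0, t' + a' * c)" "(y',t')\<in>G" unfolding G'_def by blast
    have "(y+y', t+t') \<in> G" using Gadd[OF u(2) v(2)] by simp
    moreover have "u + v = ((y+y') + (a+a') *\<^sub>R x0, (t+t') + (a+a')*c)"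
      by (simp add: u v scaleR_add_left distrib_right)
    ultimately show "u + v \<in> G'" unfolding G'_def by blast
  next
    fix r u assume "u \<in> G'"
    then obtain y t a where u: "u = (y + a *\<^sub>R x0, t + a * c)" "(y,t)\<in>G" unfolding G'_def by blast
    have "r *\<^sub>R (y,t) \<in> G" using Gsc[OF u(2)] .
    moreover have "r *\<^sub>R u = (r *\<^sub>R y + (r*a) *\<^sub>R x0, r*t + (r*a)*c)"
      by (simp add: u scaleR_add_right distrib_left)
    ultimately show "r *\<^sub>R u \<in> G'" unfolding G'_def by auto
  next
    fix x s t assume "(x,s) \<in> G'" "(x,t) \<in> G'"
    then obtain y1 t1 a1 y2 t2 a2 where 1: "x = y1 + a1 *\<^sub>R x0" "s = t1 + a1 * c" "(y1,t1)\<in>G"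
      and 2: "x = y2 + a2 *\<^sub>R x0" "t = t2 + a2 * c" "(y2,t2)\<in>G" unfolding G'_def by blast
    show "s = t"
    proof (cases "a1 = a2")
      case True
      then have "y1 = y2" using 1 2 by simp
      then show ?thesis using Gf[of y1 t1 t2] 1 2 True by simp
    next
      case False
      have "(y1 - y2, t1 - t2) \<in> G" using Gadd[OF 1(3) Gsc[OF 2(3), of "-1"]] by simp
      hence "(1/(a2 - a1)) *\<^sub>R (y1 - y2, t1 - t2) \<in> G" by (rule Gsc)
      moreover have "(1/(a2 - a1)) *\<^sub>R (y1 - y2) = x0"
      proof -
        have "y1 - y2 = (a2 - a1) *\<^sub>R x0" using 1(1) 2(1) by (simp add: algebra_simps)
        then show ?thesis using False by simp
      qed
      ultimately show ?thesis using x0 by auto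
    qed
  next
    fix x t assume "(x,t) \<in> G'"
    then obtain y t0 a where 1: "x = y + a *\<^sub>R x0" "t = t0 + a * c" "(y,t0)\<in>G" unfolding G'_def by blast
    show "t \<le> p x"
    proof (cases a "0::real" rule: linorder_cases)
      case less
      define b where "b = - a"
      have b: "b > 0" using less b_def by simp
      have "(1/b) *\<^sub>R (y,t0) \<in> G" using Gsc[OF 1(3)] .
      hence "t0/b - p ((1/b) *\<^sub>R y - x0) \<le> c" using c1 by simp
      hence "b * (t0/b - p ((1/b) *\<^sub>R y - x0)) \<le> b * c" using b by (simp add: mult_left_mono)
      moreover have "b * p ((1/b) *\<^sub>R y - x0) = p (y - b *\<^sub>R x0)"
      proof -
        have "p (b *\<^sub>R ((1/b) *\<^sub>R y - x0)) = b * p ((1/b) *\<^sub>R y - x0)" using hom b by blast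
        moreover have "b *\<^sub>R ((1/b) *\<^sub>R y - x0) = y - b *\<^sub>R x0" using b by (simp add: algebra_simps)
        ultimately show ?thesis by simp
      qed
      ultimately have "t0 - p (y - b *\<^sub>R x0) \<le> b * c" using b by (simp add: algebra_simps)
      then show ?thesis using 1 b_def by simp
    next
      case equal
      then show ?thesis using 1 Gp by simp
    next
      case greater
      have "(1/a) *\<^sub>R (y,t0) \<in> G" using Gsc[OF 1(3)] .
      hence "c \<le> p ((1/a) *\<^sub>R y + x0) - t0/a" using c2 by simp
      hence "a * c \<le> a * (p ((1/a) *\<^sub>R y + x0) - t0/a)" using greater by (simp add: mult_left_mono)
      moreover have "a * p ((1/a) *\<^sub>R y + x0) = p (y + a *\<^sub>R x0)"
      proof -
        have "p (a *\<^sub>R ((1/a) *\<^sub>R y + x0)) = a * p ((1/a) *\<^sub>R y + x0)" using hom greater by blast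
        moreover have "a *\<^sub>R ((1/a) *\<^sub>R y + x0) = y + a *\<^sub>R x0" using greater by (simp add: algebra_simps)
        ultimately show ?thesis by simp
      qed
      ultimately show ?thesis using 1 greater by (simp add: algebra_simps)
    qed
  qed
  ultimately show ?thesis using sub1 by blast
qed

lemma hahn_banach_sublinear:
  fixes p :: "'a::real_vector \<Rightarrow> real"
  assumes sub: "\<And>x y. p (x + y) \<le> p x + p y" and hom: "\<And>c x. c > 0 \<Longrightarrow> p (c *\<^sub>R x) = c * p x"
  shows "\<exists>lf. linear lf \<and> (\<forall>x. lf x \<le> p x)"
proof -
  define A where "A = {G. hb_good p G}"
  have p0: "p 0 = 0" using hom[of 2 0] by simp
  have G0: "{(0,0)} \<in> A" unfolding A_def hb_good_def using p0 by auto
  have "\<exists>M\<in>A. \<forall>X\<in>A. M \<subseteq> X \<longrightarrow> X = M"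
  proof (rule Zorn_Lemma2, rule ballI)
    fix C assume C: "C \<in> chains A"
    show "\<exists>U\<in>A. \<forall>X\<in>C. X \<subseteq> U"
    proof (cases "C = {}")
      case True then show ?thesis using G0 by blast
    next
      case False
      have CA: "C \<subseteq> A" and ch: "\<And>X Y. X\<in>C \<Longrightarrow> Y\<in>C \<Longrightarrow> X \<subseteq> Y \<or> Y \<subseteq> X"
        using C unfolding chains_def chain_subset_def by blast+
      have gd: "\<And>X. X \<in> C \<Longrightarrow> hb_good p X" using CA A_def by blast
      have "hb_good p (\<Union>C)" unfolding hb_good_def
      proof (intro conjI allI ballI impI)
        obtain X where "X \<in> C" using False by blast
        then show "(0,0) \<in> \<Union>C" using gd hb_good0 by blast
      next
        fix u v assume "u \<in> \<Union>C" "v \<in> \<Union>C"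
        then obtain X Y where "u \<in> X" "v \<in> Y" "X\<in>C" "Y\<in>C" by blast
        then have "(u \<in> Y \<and> v \<in> Y \<and> Y \<in> C) \<or> (u \<in> X \<and> v \<in> X \<and> X \<in> C)" using ch[of X Y] by blast
        moreover have "\<And>Z. Z \<in> C \<Longrightarrow> u \<in> Z \<Longrightarrow> v \<in> Z \<Longrightarrow> u + v \<in> Z"
          using gd hb_good_add by blast
        ultimately show "u + v \<in> \<Union>C" by blast
      next
        fix r u assume "u \<in> \<Union>C" then obtain X where "u \<in> X" "X \<in> C" by blast
        then show "r *\<^sub>R u \<in> \<Union>C" using gd[of X] hb_good_sc by blast
      next
        fix x s t assume "(x,s) \<in> \<Union>C" "(x,t) \<in> \<Union>C"
        then obtain X Y where "(x,s) \<in> X" "(x,t) \<in> Y" "X\<in>C" "Y\<in>C" by blast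
        then have "((x,s) \<in> Y \<and> (x,t) \<in> Y \<and> Y \<in> C) \<or> ((x,s) \<in> X \<and> (x,t) \<in> X \<and> X \<in> C)" using ch[of X Y] by blast
        moreover have "\<And>Z. Z \<in> C \<Longrightarrow> (x,s) \<in> Z \<Longrightarrow> (x,t) \<in> Z \<Longrightarrow> s = t"
          using gd hb_good_f by blast
        ultimately show "s = t" by blast
      next
        fix x t assume "(x,t) \<in> \<Union>C" then obtain X where "(x,t) \<in> X" "X \<in> C" by blast
        then show "t \<le> p x" using gd[of X] hb_good_p by blast
      qed
      then show ?thesis unfolding A_def by blast
    qed
  qed
  then obtain M where MA: "hb_good p M" and Mmax: "\<And>X. hb_good p X \<Longrightarrow> M \<subseteq> X \<Longrightarrow> X = M"
    unfolding A_def by blast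
  have tot: "\<exists>t. (x,t) \<in> M" for x
  proof (rule ccontr)
    assume "\<nexists>t. (x, t) \<in> M"
    then obtain G' where "hb_good p G'" "M \<subseteq> G'" "G' \<noteq> M" using hb_extend[OF sub hom MA] by blast
    then show False using Mmax by blast
  qed
  have Mf: "\<And>x s t. (x,s) \<in> M \<Longrightarrow> (x,t) \<in> M \<Longrightarrow> s = t"
    and Madd: "\<And>x y. x\<in>M \<Longrightarrow> y\<in>M \<Longrightarrow> x + y \<in> M"
    and Msc: "\<And>c x. x\<in>M \<Longrightarrow> c *\<^sub>R x \<in> M"
    and Mp: "\<And>x t. (x,t) \<in> M \<Longrightarrow> t \<le> p x" using hb_goodD[OF MA] by blast+
  define lf where "lf x = (THE t. (x,t) \<in> M)" for x
  have lM: "(x, lf x) \<in> M" for x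
  proof -
    obtain t where t: "(x,t) \<in> M" using tot by blast
    have "(THE t. (x,t) \<in> M) = t" by (rule the_equality[where P="\<lambda>s. (x,s) \<in> M", OF t]) (rule Mf[OF _ t])
    then show ?thesis unfolding lf_def using t by simp
  qed
  have "linear lf"
  proof (rule linearI)
    fix x y
    have "(x + y, lf x + lf y) \<in> M" using Madd[OF lM lM] by simp
    from Mf[OF this lM] show "lf (x + y) = lf x + lf y" by simp
  next
    fix r x
    have "(r *\<^sub>R x, r * lf x) \<in> M" using Msc[OF lM] by simp
    from Mf[OF this lM] show "lf (r *\<^sub>R x) = r *\<^sub>R lf x" by simp
  qed
  moreover have "\<forall>x. lf x \<le> p x" using lM Mp by blast
  ultimately show ?thesis by blast
qed

lemma half_pow_sum: "(\<Sum>k<n. (1::real)/2^(Suc k)) = 1 - 1/2^n"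
  by (induction n) (auto simp: field_simps)

lemma convex_series:
  fixes x :: "nat \<Rightarrow> 'a::banach"
  assumes K: "closed K" "convex K" and xK: "\<And>k. x k \<in> K" and xN: "\<And>k. norm (x k) \<le> N"
  shows "summable (\<lambda>k. (1/2^(Suc k)) *\<^sub>R x k)" and "(\<Sum>k. (1/2^(Suc k)) *\<^sub>R x k) \<in> K"
proof -
  have N0: "0 \<le> N" using xN[of 0] norm_ge_zero order_trans by blast
  have g: "summable (\<lambda>k. N * (1/2) * (1/2)^k)"
    by (intro summable_mult summable_geometric) simp
  show sm: "summable (\<lambda>k. (1/2^(Suc k)) *\<^sub>R x k)"
  proof (rule summable_comparison_test[OF _ g], intro exI allI impI)
    fix n
    have "norm ((1/2^(Suc n)) *\<^sub>R x n) = (1/2^(Suc n)) * norm (x n)" by simp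
    also have "\<dots> \<le> (1/2^(Suc n)) * N" using xN[of n] by (intro mult_left_mono) auto
    also have "\<dots> = N * (1/2) * (1/2)^n" by (simp add: power_divide)
    finally show "norm ((1/2^(Suc n)) *\<^sub>R x n) \<le> N * (1/2) * (1/2)^n" .
  qed
  define y where "y n = (\<Sum>k<n. (1/2^(Suc k)) *\<^sub>R x k) + (1/2^n) *\<^sub>R x n" for n
  have yK: "y n \<in> K" for n
  proof -
    define a where "a k = (if k < n then (1::real)/2^(Suc k) else 1/2^n)" for k
    have "(\<Sum>k\<in>{..n}. a k *\<^sub>R x k) \<in> K"
    proof (rule convex_sum[OF _ K(2)])
      have "sum a {..n} = (\<Sum>k<n. a k) + a n" by (simp add: lessThan_Suc_atMost[symmetric])
      also have "(\<Sum>k<n. a k) = (\<Sum>k<n. (1::real)/2^(Suc k))" by (rule sum.cong) (auto simp: a_def)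
      finally show "sum a {..n} = 1" using half_pow_sum[of n] by (simp add: a_def)
    qed (auto simp: a_def xK)
    moreover have "(\<Sum>k\<in>{..n}. a k *\<^sub>R x k) = y n"
    proof -
      have "(\<Sum>k\<in>{..n}. a k *\<^sub>R x k) = (\<Sum>k<n. a k *\<^sub>R x k) + a n *\<^sub>R x n"
        by (simp add: lessThan_Suc_atMost[symmetric])
      also have "(\<Sum>k<n. a k *\<^sub>R x k) = (\<Sum>k<n. (1/2^(Suc k)) *\<^sub>R x k)" by (rule sum.cong) (auto simp: a_def)
      finally show ?thesis by (simp add: y_def a_def)
    qed
    ultimately show ?thesis by simp
  qed
  have t1: "(\<lambda>n. \<Sum>k<n. (1/2^(Suc k)) *\<^sub>R x k) \<longlonglongrightarrow> (\<Sum>k. (1/2^(Suc k)) *\<^sub>R x k)"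
    by (rule summable_LIMSEQ[OF sm])
  have t2: "(\<lambda>n. (1/2^n) *\<^sub>R x n) \<longlonglongrightarrow> 0"
  proof (rule Lim_null_comparison[where g="\<lambda>n. N * (1/2)^n"])
    show "\<forall>\<^sub>F n in sequentially. norm ((1/2^n) *\<^sub>R x n) \<le> N * (1/2)^n"
      using xN by (intro always_eventually allI) (auto simp: power_divide divide_right_mono)
    show "(\<lambda>n. N * (1/2)^n) \<longlonglongrightarrow> 0"
      by (intro tendsto_mult_right_zero LIMSEQ_power_zero) simp
  qed
  have "y \<longlonglongrightarrow> (\<Sum>k. (1/2^(Suc k)) *\<^sub>R x k) + 0" unfolding y_def by (intro tendsto_add t1 t2)
  then show "(\<Sum>k. (1/2^(Suc k)) *\<^sub>R x k) \<in> K"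
    using closed_sequentially[OF K(1)] yK by (metis add_0_right)
qed


lemma cs_open:
  fixes A C :: "'a::banach set"
  assumes A: "closed A" "convex A" "\<And>a. a \<in> A \<Longrightarrow> norm a \<le> N"
    and C: "closed C" "convex C" "\<And>c. c \<in> C \<Longrightarrow> norm c \<le> N"
    and r: "r > 0" and cl: "ball 0 r \<subseteq> closure {a - c | a c. a \<in> A \<and> c \<in> C}"
  shows "ball 0 (r/2) \<subseteq> {a - c | a c. a \<in> A \<and> c \<in> C}"
proof
  fix v :: 'a assume v: "v \<in> ball 0 (r/2)"
  have step: "\<forall>w\<in>ball (0::'a) r. \<exists>ac. fst ac \<in> A \<and> snd ac \<in> C \<and> norm (w - (fst ac - snd ac)) < r/2"
  proof
    fix w :: 'a assume "w \<in> ball 0 r"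
    then have "w \<in> closure {a - c | a c. a \<in> A \<and> c \<in> C}" using cl by blast
    then obtain y where "y \<in> {a - c | a c. a \<in> A \<and> c \<in> C}" "dist y w < r/2"
      using r unfolding closure_approachable by (meson half_gt_zero)
    then obtain a c where "a \<in> A" "c \<in> C" "dist (a - c) w < r/2" by blast
    then show "\<exists>ac. fst ac \<in> A \<and> snd ac \<in> C \<and> norm (w - (fst ac - snd ac)) < r/2"
      by (intro exI[of _ "(a,c)"]) (simp add: dist_norm norm_minus_commute)
  qed
  then obtain F where F: "\<And>w. w \<in> ball 0 r \<Longrightarrow> fst (F w) \<in> A \<and> snd (F w) \<in> C \<and> norm (w - (fst (F w) - snd (F w))) < r/2"
    by metis
  define vv where "vv = rec_nat (2 *\<^sub>R v) (\<lambda>n u. 2 *\<^sub>R (u - (fst (F u) - snd (F u))))"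
  have vv0: "vv 0 = 2 *\<^sub>R v" and vvS: "vv (Suc n) = 2 *\<^sub>R (vv n - (fst (F (vv n)) - snd (F (vv n))))" for n
    unfolding vv_def by simp_all
  have vvb: "vv n \<in> ball 0 r" for n
  proof (induction n)
    case 0 then show ?case using v by (simp add: vv0)
  next
    case (Suc n)
    have "norm (vv (Suc n)) = 2 * norm (vv n - (fst (F (vv n)) - snd (F (vv n))))" by (simp add: vvS)
    also have "\<dots> < r" using F[OF Suc] by simp
    finally show ?case by simp
  qed
  define a where "a k = fst (F (vv k))" for k
  define c where "c k = snd (F (vv k))" for k
  have aA: "a k \<in> A" and cC: "c k \<in> C" for k using F[OF vvb[of k]] by (auto simp: a_def c_def)
  have ident: "v = (\<Sum>k<n. (1/2^(Suc k)) *\<^sub>R a k) - (\<Sum>k<n. (1/2^(Suc k)) *\<^sub>R c k) + (1/2^(Suc n)) *\<^sub>R vv n" for n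
  proof (induction n)
    case 0 then show ?case by (simp add: vv0)
  next
    case (Suc n)
    have e: "(1/2^(Suc n)) *\<^sub>R vv n = (1/2^(Suc n)) *\<^sub>R a n - (1/2^(Suc n)) *\<^sub>R c n + (1/2^(Suc (Suc n))) *\<^sub>R vv (Suc n)"
      by (simp add: vvS a_def c_def algebra_simps)
    have "v = (\<Sum>k<n. (1/2^(Suc k)) *\<^sub>R a k) - (\<Sum>k<n. (1/2^(Suc k)) *\<^sub>R c k) + (1/2^(Suc n)) *\<^sub>R vv n"
      by (rule Suc.IH)
    also have "\<dots> = (\<Sum>k<n. (1/2^(Suc k)) *\<^sub>R a k) - (\<Sum>k<n. (1/2^(Suc k)) *\<^sub>R c k) + ((1/2^(Suc n)) *\<^sub>R a n - (1/2^(Suc n)) *\<^sub>R c n + (1/2^(Suc (Suc n))) *\<^sub>R vv (Suc n))"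
      by (simp only: e)
    also have "\<dots> = ((\<Sum>k<n. (1/2^(Suc k)) *\<^sub>R a k) + (1/2^(Suc n)) *\<^sub>R a n) - ((\<Sum>k<n. (1/2^(Suc k)) *\<^sub>R c k) + (1/2^(Suc n)) *\<^sub>R c n) + (1/2^(Suc (Suc n))) *\<^sub>R vv (Suc n)"
      by (simp only: algebra_simps)
    finally show ?case by simp
  qed
  have sa: "summable (\<lambda>k. (1/2^(Suc k)) *\<^sub>R a k)" and saA: "(\<Sum>k. (1/2^(Suc k)) *\<^sub>R a k) \<in> A"
    using convex_series[of A a N, OF A(1,2) aA A(3)[OF aA]] by blast+
  have sc: "summable (\<lambda>k. (1/2^(Suc k)) *\<^sub>R c k)" and scC: "(\<Sum>k. (1/2^(Suc k)) *\<^sub>R c k) \<in> C"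
    using convex_series[of C c N, OF C(1,2) cC C(3)[OF cC]] by blast+
  have t3: "(\<lambda>n. (1/2^(Suc n)) *\<^sub>R vv n) \<longlonglongrightarrow> 0"
  proof (rule Lim_null_comparison[where g="\<lambda>n. r * (1/2)^n"])
    show "\<forall>\<^sub>F n in sequentially. norm ((1/2^(Suc n)) *\<^sub>R vv n) \<le> r * (1/2)^n"
    proof (intro always_eventually allI)
      fix n
      have "norm (vv n) < r" using vvb[of n] by simp
      then have "norm (vv n) / (2 * 2^n) \<le> r / 2^n"
        using r by (simp add: divide_simps)
      then show "norm ((1/2^(Suc n)) *\<^sub>R vv n) \<le> r * (1/2)^n" by (simp add: power_divide)
    qed
    show "(\<lambda>n. r * (1/2)^n) \<longlonglongrightarrow> 0"
      by (intro tendsto_mult_right_zero LIMSEQ_power_zero) simp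
  qed
  have "(\<lambda>n. (\<Sum>k<n. (1/2^(Suc k)) *\<^sub>R a k) - (\<Sum>k<n. (1/2^(Suc k)) *\<^sub>R c k) + (1/2^(Suc n)) *\<^sub>R vv n)
     \<longlonglongrightarrow> (\<Sum>k. (1/2^(Suc k)) *\<^sub>R a k) - (\<Sum>k. (1/2^(Suc k)) *\<^sub>R c k) + 0"
    by (intro tendsto_add tendsto_diff summable_LIMSEQ sa sc t3)
  then have "(\<lambda>n. v) \<longlonglongrightarrow> (\<Sum>k. (1/2^(Suc k)) *\<^sub>R a k) - (\<Sum>k. (1/2^(Suc k)) *\<^sub>R c k)"
    using ident by simp
  then have "v = (\<Sum>k. (1/2^(Suc k)) *\<^sub>R a k) - (\<Sum>k. (1/2^(Suc k)) *\<^sub>R c k)"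
    using LIMSEQ_const_iff by blast
  then show "v \<in> {a - c | a c. a \<in> A \<and> c \<in> C}" using saA scC by blast
qed

lemma ereal_sum_le_real:
  fixes x y :: ereal
  assumes "x \<noteq> -\<infinity>" "y \<noteq> -\<infinity>" "x + y \<le> ereal X"
  obtains px py where "x = ereal px" "y = ereal py" "px + py \<le> X"
  using assms by (cases x; cases y) auto

lemma convex_fun_real:
  assumes "convex_fun h" "0 \<le> t" "t \<le> 1" "h x = ereal px" "h y = ereal py"
  shows "h (t *\<^sub>R x + (1 - t) *\<^sub>R y) \<le> ereal (t * px + (1 - t) * py)"
proof (cases "t = 0 \<or> t = 1")
  case True then show ?thesis using assms by auto
next
  case False
  then have "0 < t" "t < 1" using assms by auto
  then have "h (t *\<^sub>R x + (1 - t) *\<^sub>R y) \<le> ereal t * h x + ereal (1 - t) * h y"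
    using assms(1) unfolding convex_fun_def by blast
  then show ?thesis using assms by simp
qed

definition Lev :: "('a::real_normed_vector \<Rightarrow> ereal) \<Rightarrow> real \<Rightarrow> 'a set" where
  "Lev h N = {a. norm a \<le> N \<and> h a \<le> ereal N}"

lemma Lev_closed:
  assumes "\<And>t. closed {a. h a \<le> ereal t}" shows "closed (Lev h N)"
proof -
  have "Lev h N = cball 0 N \<inter> {a. h a \<le> ereal N}" by (auto simp: Lev_def)
  then show ?thesis using assms closed_cball closed_Int by metis
qed

lemma Lev_mono: "N \<le> N' \<Longrightarrow> Lev h N \<subseteq> Lev h N'"
  unfolding Lev_def by (auto intro: order_trans)

lemma Lev_convex:
  assumes cv: "convex_fun h" and nm: "\<And>a. h a \<noteq> -\<infinity>" shows "convex (Lev h N)"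
proof (rule convexI)
  fix x y :: 'a and u v :: real
  assume x: "x \<in> Lev h N" and y: "y \<in> Lev h N" and u: "0 \<le> u" and v: "0 \<le> v" and uv: "u + v = 1"
  obtain px where px: "h x = ereal px" "px \<le> N" using x nm[of x] unfolding Lev_def by (cases "h x") auto
  obtain py where py: "h y = ereal py" "py \<le> N" using y nm[of y] unfolding Lev_def by (cases "h y") auto
  have vv: "v = 1 - u" using uv by simp
  have "norm (u *\<^sub>R x + v *\<^sub>R y) \<le> u * norm x + v * norm y"
    using norm_triangle_ineq[of "u *\<^sub>R x" "v *\<^sub>R y"] u v by simp
  also have "\<dots> \<le> u * N + v * N" using x y u v unfolding Lev_def by (intro add_mono mult_left_mono) auto
  finally have n: "norm (u *\<^sub>R x + v *\<^sub>R y) \<le> N" using uv by (simp add: distrib_right[symmetric])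
  have "h (u *\<^sub>R x + v *\<^sub>R y) \<le> ereal (u * px + (1 - u) * py)"
    unfolding vv by (rule convex_fun_real[OF cv u]) (use uv v px py in auto)
  also have "u * px + (1 - u) * py \<le> u * N + (1 - u) * N"
    using px py u uv v by (intro add_mono mult_left_mono) auto
  then have "ereal (u * px + (1 - u) * py) \<le> ereal N" by (simp add: algebra_simps)
  finally show "u *\<^sub>R x + v *\<^sub>R y \<in> Lev h N" using n unfolding Lev_def by simp
qed

lemma attouch_brezis:
  fixes \<phi> \<psi> :: "'a::banach \<Rightarrow> ereal"
  assumes nm1: "\<And>a. \<phi> a \<noteq> -\<infinity>" and nm2: "\<And>a. \<psi> a \<noteq> -\<infinity>"
    and cv1: "convex_fun \<phi>" and cv2: "convex_fun \<psi>"
    and cl1: "\<And>t. closed {a. \<phi> a \<le> ereal t}" and cl2: "\<And>t. closed {a. \<psi> a \<le> ereal t}"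
    and dom: "\<And>u. \<exists>a c. u = a - c \<and> \<phi> a < \<infinity> \<and> \<psi> c < \<infinity>"
    and low: "\<And>a. ereal m \<le> \<phi> a + \<psi> a"
  shows "\<exists>l. bounded_linear l \<and> (\<forall>a c. ereal (m + l (a - c)) \<le> \<phi> a + \<psi> c)"
proof -
  define SS where "SS N = {a - c | a c. a \<in> Lev \<phi> N \<and> c \<in> Lev \<psi> N}" for N
  have SSmono: "SS N \<subseteq> SS N'" if "N \<le> N'" for N N'
    using Lev_mono[OF that, of \<phi>] Lev_mono[OF that, of \<psi>] unfolding SS_def by blast
  have SSconv: "convex (SS N)" for N
  proof (rule convexI)
    fix x y :: 'a and u v :: real
    assume x: "x \<in> SS N" and y: "y \<in> SS N" and u: "0 \<le> u" and v: "0 \<le> v" and uv: "u + v = 1"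
    obtain a1 c1 where 1: "x = a1 - c1" "a1 \<in> Lev \<phi> N" "c1 \<in> Lev \<psi> N" using x unfolding SS_def by blast
    obtain a2 c2 where 2: "y = a2 - c2" "a2 \<in> Lev \<phi> N" "c2 \<in> Lev \<psi> N" using y unfolding SS_def by blast
    have "u *\<^sub>R a1 + v *\<^sub>R a2 \<in> Lev \<phi> N" using Lev_convex[OF cv1 nm1] 1 2 u v uv by (simp add: convexD)
    moreover have "u *\<^sub>R c1 + v *\<^sub>R c2 \<in> Lev \<psi> N" using Lev_convex[OF cv2 nm2] 1 2 u v uv by (simp add: convexD)
    moreover have "u *\<^sub>R x + v *\<^sub>R y = (u *\<^sub>R a1 + v *\<^sub>R a2) - (u *\<^sub>R c1 + v *\<^sub>R c2)"
      unfolding 1(1) 2(1) by (simp add: algebra_simps)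
    ultimately show "u *\<^sub>R x + v *\<^sub>R y \<in> SS N" unfolding SS_def by blast
  qed
  have cover: "\<exists>n::nat. u \<in> SS (real n)" for u
  proof -
    obtain a c where ac: "u = a - c" "\<phi> a < \<infinity>" "\<psi> c < \<infinity>" using dom by blast
    obtain pa where pa: "\<phi> a = ereal pa" using ac nm1[of a] by (cases "\<phi> a") auto
    obtain pc where pc: "\<psi> c = ereal pc" using ac nm2[of c] by (cases "\<psi> c") auto
    define n where "n = nat \<lceil>max (max (norm a) (norm c)) (max pa pc)\<rceil>"
    have "max (max (norm a) (norm c)) (max pa pc) \<le> real n" unfolding n_def by linarith
    then have "a \<in> Lev \<phi> (real n)" "c \<in> Lev \<psi> (real n)" unfolding Lev_def using pa pc by auto
    then show ?thesis using ac unfolding SS_def by blast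
  qed
  have "\<exists>n::nat. interior (closure (SS (real n))) \<noteq> {}"
  proof (rule ccontr)
    assume "\<not> ?thesis"
    then have e: "\<And>n::nat. interior (closure (SS (real n))) = {}" by blast
    have "euclidean interior_of \<Union>(range (\<lambda>n::nat. closure (SS (real n)))) = {}"
      by (rule Baire_category_alt) (auto simp: completely_metrizable_space_euclidean closed_closedin[symmetric] e)
    moreover have "\<Union>(range (\<lambda>n::nat. closure (SS (real n)))) = UNIV"
      using cover closure_subset by blast
    ultimately show False by simp
  qed
  then obtain n1 :: nat and u0 \<epsilon> where eps: "\<epsilon> > 0" and b1: "ball u0 \<epsilon> \<subseteq> closure (SS (real n1))"
    by (meson ex_in_conv mem_interior)
  obtain n2 :: nat where n2: "- u0 \<in> SS (real n2)" using cover by blast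
  define N1 where "N1 = real (max n1 n2)"
  have cl0: "ball 0 (\<epsilon>/2) \<subseteq> closure (SS N1)"
  proof
    fix v :: 'a assume v: "v \<in> ball 0 (\<epsilon>/2)"
    have "2 *\<^sub>R v + u0 \<in> ball u0 \<epsilon>" using v by (simp add: dist_norm)
    then have A: "2 *\<^sub>R v + u0 \<in> closure (SS N1)"
      using b1 closure_mono[OF SSmono[of "real n1" N1]] unfolding N1_def by auto
    have B: "- u0 \<in> closure (SS N1)"
      using n2 closure_subset SSmono[of "real n2" N1] unfolding N1_def by auto
    have "(1/2) *\<^sub>R (2 *\<^sub>R v + u0) + (1/2) *\<^sub>R (- u0) \<in> closure (SS N1)"
      by (rule convexD[OF convex_closure[OF SSconv] A B]) auto
    then show "v \<in> closure (SS N1)" by (simp add: algebra_simps)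
  qed
  have ballS: "ball 0 (\<epsilon>/2/2) \<subseteq> SS N1"
    unfolding SS_def
    by (rule cs_open[of _ N1]) (use Lev_closed[OF cl1] Lev_closed[OF cl2] Lev_convex[OF cv1 nm1]
        Lev_convex[OF cv2 nm2] eps cl0 in \<open>auto simp: Lev_def SS_def\<close>)
  define Q where "Q u = {\<mu>. \<exists>t>0. \<exists>a c. t *\<^sub>R u = a - c \<and> \<phi> a + \<psi> c \<le> ereal (m + t * \<mu>)}" for u
  define P where "P u = Inf (Q u)" for u
  have QI: "\<mu> \<in> Q u" if "t > 0" "t *\<^sub>R u = a - c" "\<phi> a + \<psi> c \<le> ereal (m + t * \<mu>)" for t u a c \<mu>
    unfolding Q_def using that by blast
  have Qcomb: "\<mu> + \<nu> \<in> Q (u + v)" if hmu: "\<mu> \<in> Q u" and hnu: "\<nu> \<in> Q v" for \<mu> \<nu> u v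
  proof -
    obtain t a c where t: "t > 0" "t *\<^sub>R u = a - c" "\<phi> a + \<psi> c \<le> ereal (m + t * \<mu>)"
      using hmu unfolding Q_def by blast
    obtain s a' c' where s: "s > 0" "s *\<^sub>R v = a' - c'" "\<phi> a' + \<psi> c' \<le> ereal (m + s * \<nu>)"
      using hnu unfolding Q_def by blast
    obtain pa pc where p: "\<phi> a = ereal pa" "\<psi> c = ereal pc" "pa + pc \<le> m + t * \<mu>"
      using ereal_sum_le_real[OF nm1 nm2 t(3)] by blast
    obtain pa' pc' where p': "\<phi> a' = ereal pa'" "\<psi> c' = ereal pc'" "pa' + pc' \<le> m + s * \<nu>"
      using ereal_sum_le_real[OF nm1 nm2 s(3)] by blast
    define l where "l = s / (t + s)"
    define r where "r = t * s / (t + s)"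
    have l01: "0 \<le> l" "l \<le> 1" using t s unfolding l_def by auto
    have r0: "r > 0" using t s unfolding r_def by auto
    have lt: "l * t = r" and ls: "(1 - l) * s = r" using t s unfolding l_def r_def by (auto simp: field_simps)
    have e1: "\<phi> (l *\<^sub>R a + (1 - l) *\<^sub>R a') \<le> ereal (l * pa + (1 - l) * pa')"
      by (rule convex_fun_real[OF cv1 l01 p(1) p'(1)])
    have e2: "\<psi> (l *\<^sub>R c + (1 - l) *\<^sub>R c') \<le> ereal (l * pc + (1 - l) * pc')"
      by (rule convex_fun_real[OF cv2 l01 p(2) p'(2)])
    have "l * (pa + pc) + (1 - l) * (pa' + pc') \<le> l * (m + t * \<mu>) + (1 - l) * (m + s * \<nu>)"
      using add_mono[OF mult_left_mono[OF p(3) l01(1)] mult_left_mono[OF p'(3), of "1 - l"]] l01 by simp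
    also have "\<dots> = m + r * (\<mu> + \<nu>)"
      using lt ls by (simp add: algebra_simps) (metis mult.assoc distrib_left)
    finally have "l * pa + (1 - l) * pa' + (l * pc + (1 - l) * pc') \<le> m + r * (\<mu> + \<nu>)"
      by (simp add: algebra_simps)
    then have "\<phi> (l *\<^sub>R a + (1 - l) *\<^sub>R a') + \<psi> (l *\<^sub>R c + (1 - l) *\<^sub>R c') \<le> ereal (m + r * (\<mu> + \<nu>))"
      using add_mono[OF e1 e2] by (simp add: order_trans)
    moreover have "r *\<^sub>R (u + v) = (l *\<^sub>R a + (1 - l) *\<^sub>R a') - (l *\<^sub>R c + (1 - l) *\<^sub>R c')"
    proof -
      have "r *\<^sub>R (u + v) = l *\<^sub>R (t *\<^sub>R u) + (1 - l) *\<^sub>R (s *\<^sub>R v)"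
        using lt ls by (simp add: scaleR_add_right)
      also have "\<dots> = (l *\<^sub>R a + (1 - l) *\<^sub>R a') - (l *\<^sub>R c + (1 - l) *\<^sub>R c')"
        unfolding t(2) s(2) by (simp add: algebra_simps)
      finally show ?thesis .
    qed
    ultimately show ?thesis unfolding Q_def using r0 by blast
  qed
  have Q0: "0 \<le> \<mu>" if h0: "\<mu> \<in> Q 0" for \<mu>
  proof -
    obtain t a c where t: "t > 0" "t *\<^sub>R (0::'a) = a - c" "\<phi> a + \<psi> c \<le> ereal (m + t * \<mu>)"
      using h0 unfolding Q_def by blast
    have "c = a" using t(2) by simp
    then have "ereal m \<le> ereal (m + t * \<mu>)" using order_trans[OF low[of a], of "ereal (m + t * \<mu>)"] t(3) by simp
    then have "0 \<le> t * \<mu>" by simp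
    then show ?thesis using t(1) by (simp add: zero_le_mult_iff)
  qed
  have Qne: "Q u \<noteq> {}" for u
  proof -
    obtain a c where ac: "u = a - c" "\<phi> a < \<infinity>" "\<psi> c < \<infinity>" using dom by blast
    obtain pa where pa: "\<phi> a = ereal pa" using ac nm1[of a] by (cases "\<phi> a") auto
    obtain pc where pc: "\<psi> c = ereal pc" using ac nm2[of c] by (cases "\<psi> c") auto
    have "pa + pc - m \<in> Q u" by (rule QI[of 1 _ a c]) (use ac pa pc in auto)
    then show ?thesis by blast
  qed
  have Qbdd: "bdd_below (Q u)" for u
  proof -
    obtain \<nu> where nu: "\<nu> \<in> Q (- u)" using Qne by blast
    have "- \<nu> \<le> \<mu>" if "\<mu> \<in> Q u" for \<mu> proof -
      have "\<mu> + \<nu> \<in> Q 0" using Qcomb[OF that nu] by simp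
      then show ?thesis using Q0 by fastforce
    qed
    then show ?thesis unfolding bdd_below_def by blast
  qed
  have Qscale: "c * \<mu> \<in> Q (c *\<^sub>R u)" if hq: "\<mu> \<in> Q u" and hc: "c > 0" for \<mu> c u
  proof -
    obtain t a d where t: "t > 0" "t *\<^sub>R u = a - d" "\<phi> a + \<psi> d \<le> ereal (m + t * \<mu>)"
      using hq unfolding Q_def by blast
    have "(t / c) *\<^sub>R (c *\<^sub>R u) = a - d" using t(2) hc by simp
    moreover have "m + (t / c) * (c * \<mu>) = m + t * \<mu>" using hc by simp
    moreover have "t / c > 0" using t(1) hc by simp
    ultimately show ?thesis using t(3) by (intro QI[of "t / c" _ a d]) auto
  qed
  have Plow: "P u \<le> \<mu>" if "\<mu> \<in> Q u" for u \<mu> unfolding P_def by (rule cInf_lower[OF that Qbdd])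
  have Pge: "x \<le> P u" if "\<And>\<mu>. \<mu> \<in> Q u \<Longrightarrow> x \<le> \<mu>" for x u unfolding P_def by (rule cInf_greatest[OF Qne that])
  have Psub: "P (u + v) \<le> P u + P v" for u v
  proof -
    have "P (u + v) - P u \<le> \<nu>" if nu: "\<nu> \<in> Q v" for \<nu>
    proof -
      have "P (u + v) - \<nu> \<le> P u"
      proof (rule Pge)
        fix \<mu> assume "\<mu> \<in> Q u"
        then have "P (u + v) \<le> \<mu> + \<nu>" by (rule Plow[OF Qcomb[OF _ nu]])
        then show "P (u + v) - \<nu> \<le> \<mu>" by simp
      qed
      then show ?thesis by simp
    qed
    then have "P (u + v) - P u \<le> P v" by (rule Pge)
    then show ?thesis by simp
  qed
  have Ple: "P (c *\<^sub>R u) \<le> c * P u" if "c > 0" for c u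
  proof -
    have "P (c *\<^sub>R u) / c \<le> P u"
    proof (rule Pge)
      fix \<mu> assume "\<mu> \<in> Q u"
      then have "P (c *\<^sub>R u) \<le> c * \<mu>" by (rule Plow[OF Qscale[OF _ that]])
      then show "P (c *\<^sub>R u) / c \<le> \<mu>" using that by (simp add: divide_simps mult.commute)
    qed
    then show ?thesis using that by (simp add: divide_simps mult.commute)
  qed
  have Phom: "P (c *\<^sub>R u) = c * P u" if "c > 0" for c u
  proof -
    have "P ((1/c) *\<^sub>R (c *\<^sub>R u)) \<le> (1/c) * P (c *\<^sub>R u)" by (rule Ple) (use that in simp)
    then have "P u \<le> (1/c) * P (c *\<^sub>R u)" using that by simp
    then have "c * P u \<le> P (c *\<^sub>R u)" using that by (simp add: divide_simps mult.commute)
    then show ?thesis using Ple[OF that, of u] by simp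
  qed
  obtain l where lin: "linear l" and lP: "\<And>x. l x \<le> P x"
    using hahn_banach_sublinear[of P, OF Psub Phom] by blast
  define K where "K = 2 * N1 - m"
  define \<delta> where "\<delta> = \<epsilon> / 8"
  have dpos: "\<delta> > 0" using eps unfolding \<delta>_def by simp
  have lK: "l u \<le> K" if "norm u \<le> \<delta>" for u
  proof -
    have "u \<in> ball 0 (\<epsilon>/2/2)" using that eps unfolding \<delta>_def by simp
    then obtain a c where ac: "u = a - c" "a \<in> Lev \<phi> N1" "c \<in> Lev \<psi> N1" using ballS unfolding SS_def by blast
    have "\<phi> a + \<psi> c \<le> ereal N1 + ereal N1" using ac by (intro add_mono) (auto simp: Lev_def)
    then have "K \<in> Q u" unfolding K_def by (intro QI[of 1 _ a c]) (use ac in auto)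
    then show ?thesis using lP[of u] Plow by (meson order_trans)
  qed
  have bl: "bounded_linear l"
  proof (rule bounded_linear_intro)
    show "l (x + y) = l x + l y" for x y using lin by (simp add: linear_add)
    show "l (r *\<^sub>R x) = r *\<^sub>R l x" for r x using lin by (simp add: linear_scale)
    show "norm (l x) \<le> norm x * (K / \<delta>)" for x
    proof (cases "x = 0")
      case True then show ?thesis using lin by (simp add: linear_0)
    next
      case False
      define w where "w = (\<delta> / norm x) *\<^sub>R x"
      have nw: "norm w = \<delta>" using False dpos unfolding w_def by simp
      have lw: "l w = (\<delta> / norm x) * l x" unfolding w_def using lin by (simp add: linear_scale)
      have "l w \<le> K" using lK nw by simp
      moreover have "l (- w) \<le> K" using lK nw by simp
      moreover have "l (- w) = - l w" using lin by (simp add: linear_neg)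
      ultimately have "\<bar>l w\<bar> \<le> K" by simp
      then have "(\<delta> / norm x) * \<bar>l x\<bar> \<le> K" using lw dpos by (simp add: abs_mult)
      then have "\<bar>l x\<bar> \<le> K * norm x / \<delta>" using dpos False by (simp add: field_simps)
      then show ?thesis by (simp add: mult.commute)
    qed
  qed
  have "ereal (m + l (a - c)) \<le> \<phi> a + \<psi> c" for a c
  proof (cases "\<phi> a + \<psi> c = \<infinity>")
    case True then show ?thesis by (simp only: True) simp
  next
    case False
    obtain pa where pa: "\<phi> a = ereal pa" using False nm1[of a] nm2[of c] by (cases "\<phi> a") auto
    obtain pc where pc: "\<psi> c = ereal pc" using False nm1[of a] nm2[of c] pa by (cases "\<psi> c") auto
    have "pa + pc - m \<in> Q (a - c)" by (rule QI[of 1 _ a c]) (use pa pc in auto)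
    then have "l (a - c) \<le> pa + pc - m" using lP Plow by (meson order_trans)
    then show ?thesis using pa pc by simp
  qed
  then show ?thesis using bl by blast
qed

lemma lsc_closed:
  fixes f :: "'a::t2_space \<Rightarrow> ereal" and h :: "'a \<Rightarrow> real"
  assumes lsc: "lsc_fun f" and h: "\<And>x. isCont h x"
  shows "closed {a. f a \<le> ereal (h a)}"
proof -
  have "open {a. ereal (h a) < f a}"
  proof (subst open_subopen, intro ballI)
    fix x assume xS: "x \<in> {a. ereal (h a) < f a}"
    then obtain r where r: "ereal (h x) < ereal r" "ereal r < f x" using ereal_dense2 by blast
    have "ereal r < Liminf (at x) f" using r(2) lsc unfolding lsc_fun_def by (meson less_le_trans)
    then have e1: "eventually (\<lambda>y. ereal r < f y) (at x)" by (rule less_LiminfD)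
    have "(h \<longlongrightarrow> h x) (at x)" using h[of x] unfolding isCont_def .
    then have e2: "eventually (\<lambda>y. h y < r) (at x)" using r(1) by (intro order_tendstoD(2)) auto
    obtain S where S: "open S" "x \<in> S" "\<And>y. y \<in> S \<Longrightarrow> y \<noteq> x \<Longrightarrow> h y < r \<and> ereal r < f y"
      using eventually_conj[OF e1 e2] unfolding eventually_at_topological by blast
    have "S \<subseteq> {a. ereal (h a) < f a}"
    proof
      fix y assume "y \<in> S"
      show "y \<in> {a. ereal (h a) < f a}"
      proof (cases "y = x")
        case True then show ?thesis using xS by simp
      next
        case False then have "h y < r" "ereal r < f y" using S(3) \<open>y \<in> S\<close> by auto
        then show ?thesis by (metis ereal_less_eq(3) less_le_trans mem_Collect_eq order_less_imp_le
             less_eq_ereal_def not_le)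
      qed
    qed
    then show "\<exists>T. open T \<and> x \<in> T \<and> T \<subseteq> {a. ereal (h a) < f a}" using S by blast
  qed
  moreover have "{a. f a \<le> ereal (h a)} = - {a. ereal (h a) < f a}" by (auto simp: not_less)
  ultimately show ?thesis by (simp add: closed_def)
qed

lemma convex_minus_linear:
  assumes cv: "convex_fun f" and nm: "\<And>a. f a \<noteq> -\<infinity>" and L: "linear L"
  shows "convex_fun (\<lambda>a. f a - ereal (L a))"
  unfolding convex_fun_def
proof (intro allI impI)
  fix x y and t :: real assume t: "0 < t \<and> t < 1"
  have le: "f (t *\<^sub>R x + (1 - t) *\<^sub>R y) \<le> ereal t * f x + ereal (1 - t) * f y"
    using cv t unfolding convex_fun_def by blast
  have Ll: "L (t *\<^sub>R x + (1 - t) *\<^sub>R y) = t * L x + (1 - t) * L y"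
    using L by (simp add: linear_add linear_scale)
  show "f (t *\<^sub>R x + (1 - t) *\<^sub>R y) - ereal (L (t *\<^sub>R x + (1 - t) *\<^sub>R y))
        \<le> ereal t * (f x - ereal (L x)) + ereal (1 - t) * (f y - ereal (L y))"
  proof (cases "f x = \<infinity> \<or> f y = \<infinity>")
    case True
    then have eq: "ereal t * (f x - ereal (L x)) + ereal (1 - t) * (f y - ereal (L y)) = \<infinity>"
      using t nm[of x] nm[of y] by (auto simp: ereal_mult_infty)
    show ?thesis unfolding eq by simp
  next
    case False
    then obtain px py where px: "f x = ereal px" and py: "f y = ereal py" using nm[of x] nm[of y]
      by (cases "f x"; cases "f y") auto
    have "f (t *\<^sub>R x + (1 - t) *\<^sub>R y) \<le> ereal (t * px + (1 - t) * py)" using le px py by simp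
    then show ?thesis unfolding Ll px py
      by (cases "f (t *\<^sub>R x + (1 - t) *\<^sub>R y)") (auto simp: algebra_simps)
  qed
qed

lemma SSDB_sym: "SSDB s \<Longrightarrow> s b c = s c b"
  unfolding SSDB_def by blast

lemma SSDB_bl: assumes "SSDB s" shows "bounded_linear (\<lambda>b. s b c)"
proof -
  obtain \<iota> :: "'a \<Rightarrow> ('a \<Rightarrow>\<^sub>L real)" where i: "\<forall>b c. blinfun_apply (\<iota> c) b = s b c"
    using assms unfolding SSDB_def by blast
  have "(\<lambda>b. s b c) = blinfun_apply (\<iota> c)" using i by auto
  then show ?thesis by (simp add: blinfun.bounded_linear_right)
qed

lemma SSDB_rep: assumes "SSDB s" "bounded_linear l" shows "\<exists>z. \<forall>b. l b = s b z"
proof -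
  obtain \<iota> :: "'a \<Rightarrow> ('a \<Rightarrow>\<^sub>L real)" where i: "\<forall>b c. blinfun_apply (\<iota> c) b = s b c" and su: "surj \<iota>"
    using assms unfolding SSDB_def by blast
  obtain z where "Blinfun l = \<iota> z" using su by (metis surjD)
  then have "\<forall>b. l b = s b z" using i bounded_linear_Blinfun_apply[OF assms(2)] by metis
  then show ?thesis by blast
qed

lemma SSDB_lin:
  assumes "SSDB s"
  shows SSDB_add1: "s (a + b) c = s a c + s b c" and SSDB_diff1: "s (a - b) c = s a c - s b c"
    and SSDB_minus1: "s (- a) c = - s a c" and SSDB_add2: "s c (a + b) = s c a + s c b"
    and SSDB_diff2: "s c (a - b) = s c a - s c b" and SSDB_minus2: "s c (- a) = - s c a"
proof -
  have bl: "linear (\<lambda>b. s b c)" by (rule bounded_linear.linear[OF SSDB_bl[OF assms]])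
  show 1: "s (a + b) c = s a c + s b c" using linear_add[OF bl] by simp
  show 2: "s (a - b) c = s a c - s b c" using linear_diff[OF bl] by simp
  show 3: "s (- a) c = - s a c" using linear_neg[OF bl] by simp
  show "s c (a + b) = s c a + s c b" using 1 SSDB_sym[OF assms] by metis
  show "s c (a - b) = s c a - s c b" using 2 SSDB_sym[OF assms] by metis
  show "s c (- a) = - s c a" using 3 SSDB_sym[OF assms] by metis
qed

lemma main_diff:
  fixes s :: "'a::banach \<Rightarrow> 'a \<Rightarrow> real" and f g :: "'a \<Rightarrow> ereal" and \<rho> :: "'a \<Rightarrow> 'a"
  assumes S: "SSDB s" and lf: "lsc_fun f" and bf: "BC_fun s f" and lg: "lsc_fun g" and bg: "BC_fun s g"
    and rl: "bounded_linear \<rho>" and rb: "bij \<rho>" and rs: "\<And>b c. s (\<rho> b) (\<rho> c) = s b (- c)"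
    and hyp: "set_diff_mk (edom f) (\<rho> -` edom g) = UNIV"
  shows "set_diff_mk (Pq s f) (\<rho> -` Pq s g) = UNIV"
proof -
  have pf: "\<And>a. f a \<noteq> -\<infinity>" and pg: "\<And>a. g a \<noteq> -\<infinity>"
    using bf bg unfolding BC_fun_def proper_fun_def by blast+
  have cf: "convex_fun f" and cg: "convex_fun g" using bf bg unfolding BC_fun_def by blast+
  have fq: "\<And>b. ereal (qf s b) \<le> f b" and ff: "\<And>b. f b \<le> fenchel_at s f b"
    using bf unfolding BC_fun_def by blast+
  have gq: "\<And>b. ereal (qf s b) \<le> g b" and gg: "\<And>b. g b \<le> fenchel_at s g b"
    using bg unfolding BC_fun_def by blast+
  note sl = SSDB_add1[OF S] SSDB_diff1[OF S] SSDB_minus1[OF S] SSDB_add2[OF S] SSDB_diff2[OF S] SSDB_minus2[OF S]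
  have sym: "\<And>b c. s b c = s c b" using SSDB_sym[OF S] .
  have qrho: "qf s (\<rho> y) = - qf s y" for y unfolding qf_def rs by (simp add: sl)
  have rc: "\<And>x. continuous (at x) \<rho>" using rl by (simp add: linear_continuous_at)
  have sc: "\<And>c x. continuous (at x) (\<lambda>b. s b c)" using SSDB_bl[OF S] by (simp add: linear_continuous_at)
  have rinv: "\<rho> (inv \<rho> d) = d" for d using rb by (simp add: bij_is_surj surj_f_inv_f)
  have rlin: "linear \<rho>" using rl bounded_linear.linear by blast
  show ?thesis
  proof (rule set_eqI, rule iffI)
    fix x :: 'a assume "x \<in> UNIV"
    define \<phi> where "\<phi> a = f a - ereal (s a x)" for a
    define \<psi> where "\<psi> c = g (\<rho> (c - x))" for c
    define m where "m = - qf s x"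
    have "\<exists>l. bounded_linear l \<and> (\<forall>a c. ereal (m + l (a - c)) \<le> \<phi> a + \<psi> c)"
    proof (rule attouch_brezis)
      show "\<phi> a \<noteq> -\<infinity>" for a unfolding \<phi>_def using pf[of a] by (cases "f a") auto
      show "\<psi> a \<noteq> -\<infinity>" for a unfolding \<psi>_def using pg by blast
      show "convex_fun \<phi>" unfolding \<phi>_def
        by (rule convex_minus_linear[OF cf pf]) (rule bounded_linear.linear[OF SSDB_bl[OF S]])
      show "convex_fun \<psi>" unfolding convex_fun_def \<psi>_def
      proof (intro allI impI)
        fix a b and t :: real assume t: "0 < t \<and> t < 1"
        have "t *\<^sub>R a + (1 - t) *\<^sub>R b - x = t *\<^sub>R (a - x) + (1 - t) *\<^sub>R (b - x)" by (simp add: algebra_simps)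
        then have "\<rho> (t *\<^sub>R a + (1 - t) *\<^sub>R b - x) = t *\<^sub>R \<rho> (a - x) + (1 - t) *\<^sub>R \<rho> (b - x)"
          using rlin by (simp add: linear_add linear_scale)
        then show "g (\<rho> (t *\<^sub>R a + (1 - t) *\<^sub>R b - x)) \<le> ereal t * g (\<rho> (a - x)) + ereal (1 - t) * g (\<rho> (b - x))"
          using cg t unfolding convex_fun_def by simp
      qed
      show "closed {a. \<phi> a \<le> ereal t}" for t
      proof -
        have "{a. \<phi> a \<le> ereal t} = {a. f a \<le> ereal (s a x + t)}"
        proof (rule Collect_cong)
          fix a show "(\<phi> a \<le> ereal t) = (f a \<le> ereal (s a x + t))"
            unfolding \<phi>_def using pf[of a] by (cases "f a") (auto simp: algebra_simps)
        qed
        moreover have "closed {a. f a \<le> ereal (s a x + t)}"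
          by (rule lsc_closed[OF lf]) (intro continuous_intros sc)
        ultimately show ?thesis by simp
      qed
      show "closed {a. \<psi> a \<le> ereal t}" for t
      proof -
        have "{a. \<psi> a \<le> ereal t} = (\<lambda>c. \<rho> (c - x)) -` {y. g y \<le> ereal ((\<lambda>_. t) y)}"
          unfolding \<psi>_def by auto
        moreover have "closed ((\<lambda>c. \<rho> (c - x)) -` {y. g y \<le> ereal ((\<lambda>_. t) y)})"
        proof (rule continuous_closed_vimage)
          show "closed {y. g y \<le> ereal ((\<lambda>_. t) y)}" by (rule lsc_closed[OF lg]) simp
          show "continuous (at c) (\<lambda>c. \<rho> (c - x))" for c
            using continuous_at_compose[of c "\<lambda>c. c - x" \<rho>] rc by (simp add: continuous_intros o_def)
        qed
        ultimately show ?thesis by simp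
      qed
      show "\<exists>a c. u = a - c \<and> \<phi> a < \<infinity> \<and> \<psi> c < \<infinity>" for u
      proof -
        have "u + x \<in> set_diff_mk (edom f) (\<rho> -` edom g)" using hyp by simp
        then obtain a c' where ac: "u + x = a - c'" "a \<in> edom f" "\<rho> c' \<in> edom g"
          unfolding set_diff_mk_def by blast
        have "u = a - (c' + x)" using ac(1) by (simp add: algebra_simps)
        moreover have "\<phi> a < \<infinity>" using ac(2) pf[of a] unfolding \<phi>_def edom_def by (cases "f a") auto
        moreover have "\<psi> (c' + x) < \<infinity>" using ac(3) unfolding \<psi>_def edom_def using pg[of "\<rho> c'"] by (cases "g (\<rho> c')") auto
        ultimately show ?thesis by blast
      qed
      show "ereal m \<le> \<phi> a + \<psi> a" for a
      proof -
        have q1: "ereal (qf s a) \<le> f a" by (rule fq)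
        have q2: "ereal (- qf s (a - x)) \<le> g (\<rho> (a - x))" using gq[of "\<rho> (a - x)"] qrho by simp
        have id: "qf s a - s a x + - qf s (a - x) = m"
          unfolding m_def qf_def by (simp add: sl sym[of x a] field_simps)
        show ?thesis unfolding \<phi>_def \<psi>_def
          using q1 q2 pf[of a] pg[of "\<rho> (a - x)"] id
          by (cases "f a"; cases "g (\<rho> (a - x))") auto
      qed
    qed
    then obtain l where bl: "bounded_linear l" and ineq: "\<And>a c. ereal (m + l (a - c)) \<le> \<phi> a + \<psi> c"
      by blast
    obtain z where z: "\<And>b. l b = s b z" using SSDB_rep[OF S bl] by blast
    have key: "ereal (s a (x + z) + s d (\<rho> z) - qf s x - s x z) \<le> f a + g d" for a d
    proof -
      define c' where "c' = inv \<rho> d"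
      have rc': "\<rho> c' = d" unfolding c'_def by (rule rinv)
      have sc': "s c' z = - s d (\<rho> z)" using rs[of c' z] rc' by (simp add: sl)
      have "ereal (m + s (a - (c' + x)) z) \<le> f a - ereal (s a x) + g d"
        using ineq[of a "c' + x"] z rc' unfolding \<phi>_def \<psi>_def by simp
      moreover have "m + s (a - (c' + x)) z + s a x = s a (x + z) + s d (\<rho> z) - qf s x - s x z"
        unfolding m_def using sc' by (simp add: sl sym[of z x] algebra_simps)
      ultimately show ?thesis using pf[of a] pg[of d]
        by (cases "f a"; cases "g d") (auto simp: algebra_simps)
    qed
    have qid: "qf s x + s x z - qf s (x + z) = qf s (\<rho> z)"
      unfolding qf_def by (simp add: rs sl sym[of z x] field_simps)
    have F: "f (x + z) \<le> ereal (qf s (x + z))"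
    proof (rule ccontr)
      assume "\<not> ?thesis"
      then have "ereal (qf s (x + z)) < fenchel_at s f (x + z)" using ff[of "x + z"] by (meson not_le less_le_trans)
      then obtain a where a: "ereal (qf s (x + z)) < ereal (s a (x + z)) - f a"
        unfolding fenchel_at_def less_SUP_iff by blast
      then obtain pa where pa: "f a = ereal pa" and lt: "qf s (x + z) < s a (x + z) - pa"
        using pf[of a] by (cases "f a") auto
      have "fenchel_at s g (\<rho> z) \<le> ereal (qf s x + s x z - (s a (x + z) - pa))"
        unfolding fenchel_at_def
      proof (rule SUP_least)
        fix d
        have "ereal (s a (x + z) + s d (\<rho> z) - qf s x - s x z) \<le> ereal pa + g d" using key[of a d] pa by simp
        then show "ereal (s d (\<rho> z)) - g d \<le> ereal (qf s x + s x z - (s a (x + z) - pa))"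
          using pg[of d] by (cases "g d") auto
      qed
      moreover have "ereal (qf s (\<rho> z)) \<le> fenchel_at s g (\<rho> z)" using gq gg order_trans by blast
      ultimately have "qf s (\<rho> z) \<le> qf s x + s x z - (s a (x + z) - pa)"
        using order_trans ereal_less_eq(3) by metis
      moreover have "qf s x + s x z - (s a (x + z) - pa) < qf s (\<rho> z)" using lt qid by linarith
      ultimately show False by simp
    qed
    have G: "g (\<rho> z) \<le> ereal (qf s (\<rho> z))"
    proof (rule ccontr)
      assume "\<not> ?thesis"
      then have "ereal (qf s (\<rho> z)) < fenchel_at s g (\<rho> z)" using gg[of "\<rho> z"] by (meson not_le less_le_trans)
      then obtain d where d: "ereal (qf s (\<rho> z)) < ereal (s d (\<rho> z)) - g d"
        unfolding fenchel_at_def less_SUP_iff by blast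
      then obtain pd where pd: "g d = ereal pd" and lt: "qf s (\<rho> z) < s d (\<rho> z) - pd"
        using pg[of d] by (cases "g d") auto
      have "fenchel_at s f (x + z) \<le> ereal (qf s x + s x z - (s d (\<rho> z) - pd))"
        unfolding fenchel_at_def
      proof (rule SUP_least)
        fix a
        have "ereal (s a (x + z) + s d (\<rho> z) - qf s x - s x z) \<le> f a + ereal pd" using key[of a d] pd by simp
        then show "ereal (s a (x + z)) - f a \<le> ereal (qf s x + s x z - (s d (\<rho> z) - pd))"
          using pf[of a] by (cases "f a") auto
      qed
      moreover have "ereal (qf s (x + z)) \<le> fenchel_at s f (x + z)" using fq ff order_trans by blast
      ultimately have "qf s (x + z) \<le> qf s x + s x z - (s d (\<rho> z) - pd)"
        using order_trans ereal_less_eq(3) by metis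
      moreover have "qf s x + s x z - (s d (\<rho> z) - pd) < qf s (x + z)" using lt qid by linarith
      ultimately show False by simp
    qed
    have "x + z \<in> Pq s f" unfolding Pq_def using F fq[of "x + z"] by (simp add: antisym)
    moreover have "z \<in> \<rho> -` Pq s g" unfolding Pq_def using G gq[of "\<rho> z"] by (simp add: antisym)
    moreover have "x = (x + z) - z" by simp
    ultimately show "x \<in> set_diff_mk (Pq s f) (\<rho> -` Pq s g)" unfolding set_diff_mk_def by blast
  qed simp
qed

lemma main_iff:
  fixes s :: "'a::banach \<Rightarrow> 'a \<Rightarrow> real" and f g :: "'a \<Rightarrow> ereal" and \<rho> :: "'a \<Rightarrow> 'a"
  assumes S: "SSDB s" and lf: "lsc_fun f" and bf: "BC_fun s f" and lg: "lsc_fun g" and bg: "BC_fun s g"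
    and rl: "bounded_linear \<rho>" and rb: "bij \<rho>" and rs: "\<And>b c. s (\<rho> b) (\<rho> c) = s b (- c)"
  shows "set_diff_mk (edom f) (\<rho> -` edom g) = UNIV \<longleftrightarrow> set_diff_mk (Pq s f) (\<rho> -` Pq s g) = UNIV"
proof
  assume "set_diff_mk (edom f) (\<rho> -` edom g) = UNIV"
  then show "set_diff_mk (Pq s f) (\<rho> -` Pq s g) = UNIV" by (rule main_diff[OF assms])
next
  assume h: "set_diff_mk (Pq s f) (\<rho> -` Pq s g) = UNIV"
  have "Pq s f \<subseteq> edom f" "Pq s g \<subseteq> edom g" unfolding Pq_def edom_def by auto
  then have "set_diff_mk (Pq s f) (\<rho> -` Pq s g) \<subseteq> set_diff_mk (edom f) (\<rho> -` edom g)"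
    unfolding set_diff_mk_def by blast
  then show "set_diff_mk (edom f) (\<rho> -` edom g) = UNIV" using h by blast
qed

lemma sum_as_diff:
  assumes "linear \<rho>"
  shows "set_sum_mk A (\<rho> -` C) = set_diff_mk A ((\<lambda>b. - \<rho> b) -` C)"
proof -
  have n: "\<rho> (- c) = - \<rho> c" for c using linear_neg[OF assms] .
  show ?thesis unfolding set_sum_mk_def set_diff_mk_def
  proof (intro set_eqI iffI)
    fix x assume "x \<in> {a + c |a c. a \<in> A \<and> c \<in> \<rho> -` C}"
    then obtain a c where "x = a + c" "a \<in> A" "\<rho> c \<in> C" by blast
    then have "x = a - (- c)" "- \<rho> (- c) \<in> C" using n by auto
    then show "x \<in> {a - c |a c. a \<in> A \<and> c \<in> (\<lambda>b. - \<rho> b) -` C}" using \<open>a \<in> A\<close> by blast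
  next
    fix x assume "x \<in> {a - c |a c. a \<in> A \<and> c \<in> (\<lambda>b. - \<rho> b) -` C}"
    then obtain a c where "x = a - c" "a \<in> A" "- \<rho> c \<in> C" by blast
    then have "x = a + (- c)" "\<rho> (- c) \<in> C" using n by auto
    then show "x \<in> {a + c |a c. a \<in> A \<and> c \<in> \<rho> -` C}" using \<open>a \<in> A\<close> by blast
  qed
qed

theorem corollary4p7:
  fixes s :: "'a::banach \<Rightarrow> 'a \<Rightarrow> real"
    and f g :: "'a \<Rightarrow> ereal"
    and \<rho> :: "'a \<Rightarrow> 'a"
  assumes "SSDB s"
    and "proper_fun f" "convex_fun f" "lsc_fun f" "BC_fun s f"
    and "proper_fun g" "convex_fun g" "lsc_fun g" "BC_fun s g"
    and "bounded_linear \<rho>" "bij \<rho>"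
    and "\<And>b c. s (\<rho> b) (\<rho> c) = s b (- c)"
  shows "(set_diff_mk (edom f) (\<rho> -` edom g) = UNIV \<longleftrightarrow>
            set_diff_mk (Pq s f) (\<rho> -` Pq s g) = UNIV)
       \<and> (set_sum_mk (edom f) (\<rho> -` edom g) = UNIV \<longleftrightarrow>
            set_sum_mk (Pq s f) (\<rho> -` Pq s g) = UNIV)"
proof
  show "set_diff_mk (edom f) (\<rho> -` edom g) = UNIV \<longleftrightarrow> set_diff_mk (Pq s f) (\<rho> -` Pq s g) = UNIV"
    by (rule main_iff) (use assms in auto)
  have rlin: "linear \<rho>" using assms(10) bounded_linear.linear by blast
  have bl': "bounded_linear (\<lambda>b. - \<rho> b)" using assms(10) by (rule bounded_linear_minus)
  have bij': "bij (\<lambda>b. - \<rho> b)"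
  proof (rule bijI)
    show "inj (\<lambda>b. - \<rho> b)" using bij_is_inj[OF assms(11)] by (simp add: inj_def)
    show "surj (\<lambda>b. - \<rho> b)"
    proof (rule surjI)
      fix y show "- \<rho> (inv \<rho> (- y)) = y" using assms(11) by (simp add: bij_is_surj surj_f_inv_f)
    qed
  qed
  have rs': "s (- \<rho> b) (- \<rho> c) = s b (- c)" for b c
    using assms(12)[of b c] SSDB_minus1[OF assms(1)] SSDB_minus2[OF assms(1)] by simp
  show "set_sum_mk (edom f) (\<rho> -` edom g) = UNIV \<longleftrightarrow> set_sum_mk (Pq s f) (\<rho> -` Pq s g) = UNIV"
    unfolding sum_as_diff[OF rlin]
    by (rule main_iff[OF assms(1,4,5,8,9) bl' bij' rs'])
qed

end
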